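(* Let $n\geq 2$. Let $\mathbf{P}\subseteq\mathbf{Q}$ be structures in $\mathcal{PO}_{n,<_1,\ldots,<_n}$ ($\mathbf{P}$ a substructure of $\mathbf{Q}$). If $f$ is an embedding of $\mathbf{P}$ into $\mathbf{D}_{n,<_1,\ldots,<_n}$, then there is an embedding $g$ of $\mathbf{Q}$ into $\mathbf{D}_{n,<_1,\ldots,<_n}$ which extends $f$.
   Context: Fix $n\geq 2$ and a set $D_n\subseteq\mathbb{Q}^n$ which is dense in $\mathbb{Q}^n$ (product topology) and such that no two distinct points of $D_n$ share a common coordinate. $\mathbf{D}_{n,<_1,\ldots,<_n}=(D_n,<,<_1,\ldots,<_n)$ where $<$ is the product order ($\mathbf{a}<\mathbf{b}$ iff $a_i\leq b_i$ for all $i$ and $\mathbf{a}\neq\mathbf{b}$) and $\mathbf{a}<_i\mathbf{b}$ iff $a_i<b_i$. $\mathcal{PO}_{n,<_1,\ldots,<_n}$ is the class of all finite structures $(P,<,<_1,\ldots,<_n)$ where $<_1,\ldots,<_n$ are strict linear orders on $P$ and $a<b$ iff $a<_ib$ for all $i\leq n$. Embeddings are injective maps preserving and reflecting each of $<,<_1,\ldots,<_n$; substructures carry the induced relations. *)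

theory Defs
  imports Main "HOL.Rat"
begin

text \<open>Points of Q^n are represented as functions nat => rat that vanish outside {..<n}.\<close>
definition rat_space :: "nat \<Rightarrow> (nat \<Rightarrow> rat) set" where
  "rat_space n = {x. \<forall>i\<ge>n. x i = 0}"

text \<open>Density of D in Q^n w.r.t. the product topology (Q with its order topology):
  D meets every nonempty basic open set, i.e. every product of open intervals.\<close>
definition dense_in_Qn :: "nat \<Rightarrow> (nat \<Rightarrow> rat) set \<Rightarrow> bool" where
  "dense_in_Qn n D \<longleftrightarrow>
     (\<forall>a b :: nat \<Rightarrow> rat. (\<forall>i<n. a i < b i) \<longrightarrow>
        (\<exists>d\<in>D. \<forall>i<n. a i < d i \<and> d i < b i))"

definition no_common_coord :: "nat \<Rightarrow> (nat \<Rightarrow> rat) set \<Rightarrow> bool" where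
  "no_common_coord n D \<longleftrightarrow>
     (\<forall>a\<in>D. \<forall>b\<in>D. a \<noteq> b \<longrightarrow> (\<forall>i<n. a i \<noteq> b i))"

definition prod_less :: "nat \<Rightarrow> (nat \<Rightarrow> rat) \<Rightarrow> (nat \<Rightarrow> rat) \<Rightarrow> bool" where
  "prod_less n a b \<longleftrightarrow> (\<forall>i<n. a i \<le> b i) \<and> a \<noteq> b"

definition coord_less :: "nat \<Rightarrow> (nat \<Rightarrow> rat) \<Rightarrow> (nat \<Rightarrow> rat) \<Rightarrow> bool" where
  "coord_less i a b \<longleftrightarrow> a i < b i"

definition strict_linear_on :: "'a set \<Rightarrow> ('a \<Rightarrow> 'a \<Rightarrow> bool) \<Rightarrow> bool" where
  "strict_linear_on A r \<longleftrightarrow>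
     (\<forall>x\<in>A. \<not> r x x) \<and>
     (\<forall>x\<in>A. \<forall>y\<in>A. \<forall>z\<in>A. r x y \<longrightarrow> r y z \<longrightarrow> r x z) \<and>
     (\<forall>x\<in>A. \<forall>y\<in>A. x \<noteq> y \<longrightarrow> r x y \<or> r y x)"

text \<open>(A, lt, L 0, ..., L (n-1)) is a member of PO_{n,<_1,...,<_n}.\<close>
definition in_PO :: "nat \<Rightarrow> 'a set \<Rightarrow> ('a \<Rightarrow> 'a \<Rightarrow> bool) \<Rightarrow> (nat \<Rightarrow> 'a \<Rightarrow> 'a \<Rightarrow> bool) \<Rightarrow> bool" where
  "in_PO n A lt L \<longleftrightarrow> finite A \<and>
     (\<forall>i<n. strict_linear_on A (L i)) \<and>
     (\<forall>a\<in>A. \<forall>b\<in>A. lt a b \<longleftrightarrow> (\<forall>i<n. L i a b))"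

definition is_embedding ::
  "nat \<Rightarrow> ('a \<Rightarrow> 'b) \<Rightarrow> 'a set \<Rightarrow> ('a \<Rightarrow> 'a \<Rightarrow> bool) \<Rightarrow> (nat \<Rightarrow> 'a \<Rightarrow> 'a \<Rightarrow> bool)
       \<Rightarrow> 'b set \<Rightarrow> ('b \<Rightarrow> 'b \<Rightarrow> bool) \<Rightarrow> (nat \<Rightarrow> 'b \<Rightarrow> 'b \<Rightarrow> bool) \<Rightarrow> bool" where
  "is_embedding n f A ltA LA B ltB LB \<longleftrightarrow>
     inj_on f A \<and> f ` A \<subseteq> B \<and>
     (\<forall>x\<in>A. \<forall>y\<in>A. ltA x y \<longleftrightarrow> ltB (f x) (f y)) \<and>
     (\<forall>i<n. \<forall>x\<in>A. \<forall>y\<in>A. LA i x y \<longleftrightarrow> LB i (f x) (f y))"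

end

theory Submission
  imports Defs
begin

definition good :: "nat \<Rightarrow> (nat \<Rightarrow> rat) set \<Rightarrow> ('a \<Rightarrow> (nat \<Rightarrow> rat)) \<Rightarrow> 'a set \<Rightarrow> (nat \<Rightarrow> 'a \<Rightarrow> 'a \<Rightarrow> bool) \<Rightarrow> bool" where
  "good n D g A L \<longleftrightarrow> g ` A \<subseteq> D \<and> (\<forall>i<n. \<forall>x\<in>A. \<forall>y\<in>A. L i x y \<longleftrightarrow> g x i < g y i)"

lemma sep_interval:
  fixes X Y :: "rat set"
  assumes "finite X" "finite Y" "\<forall>x\<in>X. \<forall>y\<in>Y. x < y"
  shows "\<exists>a b. a < b \<and> (\<forall>x\<in>X. x \<le> a) \<and> (\<forall>y\<in>Y. b \<le> y)"
proof (cases "X = {}")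
  case True
  show ?thesis
  proof (cases "Y = {}")
    case True
    then show ?thesis using \<open>X = {}\<close> by (intro exI[of _ 0] exI[of _ 1]) auto
  next
    case False
    have "\<forall>y\<in>Y. Min Y \<le> y" using assms(2) by simp
    then show ?thesis using \<open>X = {}\<close>
      by (intro exI[of _ "Min Y - 1"] exI[of _ "Min Y"]) simp
  qed
next
  case False
  show ?thesis
  proof (cases "Y = {}")
    case True
    then show ?thesis using \<open>X \<noteq> {}\<close> assms
      by (intro exI[of _ "Max X"] exI[of _ "Max X + 1"]) auto
  next
    case False
    have "Max X \<in> X" "Min Y \<in> Y" using False \<open>X \<noteq> {}\<close> assms by auto
    then have "Max X < Min Y" using assms by auto
    then show ?thesis using False \<open>X \<noteq> {}\<close> assms
      by (intro exI[of _ "Max X"] exI[of _ "Min Y"]) auto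
  qed
qed

lemma extend_one:
  assumes dense: "dense_in_Qn n D"
    and lin: "\<forall>i<n. strict_linear_on Q (L i)"
    and AQ: "A \<subseteq> Q" and fin: "finite A" and q: "q \<in> Q" "q \<notin> A"
    and g: "good n D g A L"
  shows "\<exists>g'. good n D g' (insert q A) L \<and> (\<forall>x\<in>A. g' x = g x)"
proof -
  have "\<forall>i. \<exists>ab. i < n \<longrightarrow> fst ab < snd ab \<and> (\<forall>p\<in>A. L i p q \<longrightarrow> g p i \<le> fst ab)
        \<and> (\<forall>p\<in>A. L i q p \<longrightarrow> snd ab \<le> g p i)"
  proof (intro allI)
    fix i
    show "\<exists>ab. i < n \<longrightarrow> fst ab < snd ab \<and> (\<forall>p\<in>A. L i p q \<longrightarrow> g p i \<le> fst ab)
        \<and> (\<forall>p\<in>A. L i q p \<longrightarrow> snd ab \<le> g p i)"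
    proof (cases "i < n")
      case True
      let ?X = "(\<lambda>p. g p i) ` {p\<in>A. L i p q}"
      let ?Y = "(\<lambda>p. g p i) ` {p\<in>A. L i q p}"
      have "\<forall>x\<in>?X. \<forall>y\<in>?Y. x < y"
      proof (intro ballI)
        fix x y assume "x \<in> ?X" "y \<in> ?Y"
        from \<open>x \<in> ?X\<close> obtain p where p1: "p \<in> A" "L i p q" "x = g p i" by blast
        from \<open>y \<in> ?Y\<close> obtain p' where p2: "p' \<in> A" "L i q p'" "y = g p' i" by blast
        note pp = p1 p2
        have sl: "strict_linear_on Q (L i)" using lin True by blast
        have tr: "\<forall>x\<in>Q. \<forall>y\<in>Q. \<forall>z\<in>Q. L i x y \<longrightarrow> L i y z \<longrightarrow> L i x z"
          using sl unfolding strict_linear_on_def by (elim conjE)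
        have "p \<in> Q" "p' \<in> Q" using pp AQ by auto
        then have "L i p p'" using tr q(1) pp(2,5) by blast
        moreover have "\<forall>x\<in>A. \<forall>y\<in>A. L i x y \<longleftrightarrow> g x i < g y i" using g True unfolding good_def by blast
        ultimately show "x < y" using pp by blast
      qed
      moreover have "finite ?X" "finite ?Y" using fin by simp_all
      ultimately obtain a b where "a < b" "\<forall>x\<in>?X. x \<le> a" "\<forall>y\<in>?Y. b \<le> y"
        using sep_interval[of ?X ?Y] by blast
      then have "fst (a,b) < snd (a,b) \<and> (\<forall>p\<in>A. L i p q \<longrightarrow> g p i \<le> fst (a,b))
        \<and> (\<forall>p\<in>A. L i q p \<longrightarrow> snd (a,b) \<le> g p i)" by simp
      then show ?thesis by blast
    qed simp
  qed
  from choice[OF this] obtain ab where ab0: "\<forall>i. i < n \<longrightarrow> fst (ab i) < snd (ab i) \<and> (\<forall>p\<in>A. L i p q \<longrightarrow> g p i \<le> fst (ab i))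
        \<and> (\<forall>p\<in>A. L i q p \<longrightarrow> snd (ab i) \<le> g p i)"
    by (elim exE) (rule that)
  then have ab: "\<And>i. i < n \<Longrightarrow> fst (ab i) < snd (ab i) \<and> (\<forall>p\<in>A. L i p q \<longrightarrow> g p i \<le> fst (ab i))
        \<and> (\<forall>p\<in>A. L i q p \<longrightarrow> snd (ab i) \<le> g p i)" by blast
  obtain d where d: "d \<in> D" "\<And>i. i < n \<Longrightarrow> fst (ab i) < d i \<and> d i < snd (ab i)"
  proof -
    have "\<forall>i<n. fst (ab i) < snd (ab i)" using ab by blast
    then obtain d where "d \<in> D" "\<forall>i<n. fst (ab i) < d i \<and> d i < snd (ab i)"
      using dense[unfolded dense_in_Qn_def, rule_format, of "\<lambda>i. fst (ab i)" "\<lambda>i. snd (ab i)"] by blast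
    then show ?thesis using that by blast
  qed
  define g' where "g' = g(q := d)"
  have agree: "\<forall>x\<in>A. g' x = g x" using q unfolding g'_def by auto
  have "good n D g' (insert q A) L"
    unfolding good_def
  proof (intro conjI allI impI ballI)
    show "g' ` insert q A \<subseteq> D" using g d q unfolding good_def g'_def by auto
  next
    fix i x y assume i: "i < n" and x: "x \<in> insert q A" and y: "y \<in> insert q A"
    have sl: "strict_linear_on Q (L i)" using lin i by blast
    have irr: "\<not> L i q q" using sl q(1) unfolding strict_linear_on_def by blast
    have tot: "L i p q \<or> L i q p" if pA: "p \<in> A" for p
    proof -
      have "p \<in> Q" "p \<noteq> q" using pA AQ q(2) by auto
      then show ?thesis using sl q(1) unfolding strict_linear_on_def by blast
    qed
    have di: "fst (ab i) < d i" "d i < snd (ab i)" using d i by auto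
    have abi: "\<forall>p\<in>A. L i p q \<longrightarrow> g p i \<le> fst (ab i)" "\<forall>p\<in>A. L i q p \<longrightarrow> snd (ab i) \<le> g p i"
      using ab i by auto
    show "L i x y \<longleftrightarrow> g' x i < g' y i"
    proof (cases "x = q")
      case True
      show ?thesis
      proof (cases "y = q")
        case True then show ?thesis using \<open>x = q\<close> irr by (simp add: g'_def)
      next
        case False
        then have "y \<in> A" using y by auto
        have "L i q y \<longleftrightarrow> d i < g y i"
        proof
          assume "L i q y" then show "d i < g y i" using abi(2) \<open>y \<in> A\<close> di(2) by fastforce
        next
          assume "d i < g y i"
          show "L i q y"
          proof (rule ccontr)
            assume "\<not> L i q y"
            then have "L i y q" using tot \<open>y \<in> A\<close> by blast
            then have "g y i \<le> fst (ab i)" using abi(1) \<open>y \<in> A\<close> by blast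
            then show False using di(1) \<open>d i < g y i\<close> by simp
          qed
        qed
        then show ?thesis using \<open>x = q\<close> False by (simp add: g'_def)
      qed
    next
      case False
      then have xA: "x \<in> A" using x by auto
      show ?thesis
      proof (cases "y = q")
        case True
        have "L i x q \<longleftrightarrow> g x i < d i"
        proof
          assume "L i x q" then show "g x i < d i" using abi(1) xA di(1) by fastforce
        next
          assume "g x i < d i"
          show "L i x q"
          proof (rule ccontr)
            assume "\<not> L i x q"
            then have "L i q x" using tot xA by blast
            then have "snd (ab i) \<le> g x i" using abi(2) xA by blast
            then show False using di(2) \<open>g x i < d i\<close> by simp
          qed
        qed
        then show ?thesis using True \<open>x \<noteq> q\<close> by (simp add: g'_def)
      next
        case False
        then have "y \<in> A" using y by auto
        moreover have "\<forall>x\<in>A. \<forall>y\<in>A. L i x y \<longleftrightarrow> g x i < g y i" using g i unfolding good_def by blast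
        moreover have "g' x = g x" "g' y = g y" using \<open>x \<noteq> q\<close> False unfolding g'_def by auto
        ultimately show ?thesis using xA by simp
      qed
    qed
  qed
  then show ?thesis using agree by blast
qed

lemma extend_many:
  assumes dense: "dense_in_Qn n D"
    and lin: "\<forall>i<n. strict_linear_on Q (L i)"
    and PQ: "P \<subseteq> Q" and finP: "finite P"
    and g: "good n D f P L"
    and F: "finite F" "F \<subseteq> Q"
  shows "\<exists>g'. good n D g' (P \<union> F) L \<and> (\<forall>x\<in>P. g' x = f x)"
  using F
proof (induction F rule: finite_induct)
  case empty
  then show ?case using g by auto
next
  case (insert q F)
  then obtain g1 where g1: "good n D g1 (P \<union> F) L" "\<forall>x\<in>P. g1 x = f x" by auto
  show ?case
  proof (cases "q \<in> P \<union> F")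
    case True
    then have "P \<union> insert q F = P \<union> F" by auto
    then show ?thesis using g1 by auto
  next
    case False
    obtain g2 where "good n D g2 (insert q (P \<union> F)) L" "\<forall>x\<in>P \<union> F. g2 x = g1 x"
      using extend_one[OF dense lin, where A="P \<union> F" and q=q and g=g1] PQ insert finP g1 False by auto
    then show ?thesis using g1 by auto
  qed
qed

theorem lemma3p1:
  fixes n :: nat and D :: "(nat \<Rightarrow> rat) set"
    and P Q :: "'a set" and lt :: "'a \<Rightarrow> 'a \<Rightarrow> bool" and L :: "nat \<Rightarrow> 'a \<Rightarrow> 'a \<Rightarrow> bool"
    and f :: "'a \<Rightarrow> (nat \<Rightarrow> rat)"
  assumes "n \<ge> 2"
    and "D \<subseteq> rat_space n"
    and "dense_in_Qn n D"
    and "no_common_coord n D"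
    and "in_PO n Q lt L"
    and "P \<subseteq> Q"
    and "is_embedding n f P lt L D (prod_less n) coord_less"
  shows "\<exists>g. is_embedding n g Q lt L D (prod_less n) coord_less \<and> (\<forall>x\<in>P. g x = f x)"
proof -
  have finQ: "finite Q" and lin: "\<forall>i<n. strict_linear_on Q (L i)"
    and ltQ: "\<forall>a\<in>Q. \<forall>b\<in>Q. lt a b \<longleftrightarrow> (\<forall>i<n. L i a b)"
    using assms(5) unfolding in_PO_def by auto
  have finP: "finite P" using finQ assms(6) finite_subset by blast
  have gf: "good n D f P L" using assms(7) unfolding is_embedding_def good_def coord_less_def by auto
  obtain g where g: "good n D g (P \<union> Q) L" "\<forall>x\<in>P. g x = f x"
    using extend_many[OF assms(3) lin assms(6) finP gf finQ] by auto
  have PQ: "P \<union> Q = Q" using assms(6) by auto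
  have gD: "g ` Q \<subseteq> D" and gL: "\<forall>i<n. \<forall>x\<in>Q. \<forall>y\<in>Q. L i x y \<longleftrightarrow> g x i < g y i"
    using g(1) unfolding good_def PQ by auto
  have n0: "0 < n" using assms(1) by auto
  have inj: "inj_on g Q"
  proof (rule inj_onI)
    fix x y assume "x \<in> Q" "y \<in> Q" "g x = g y"
    then show "x = y" using lin n0 gL unfolding strict_linear_on_def by (metis less_irrefl)
  qed
  have lt: "\<forall>x\<in>Q. \<forall>y\<in>Q. lt x y \<longleftrightarrow> prod_less n (g x) (g y)"
  proof (intro ballI)
    fix x y assume x: "x \<in> Q" and y: "y \<in> Q"
    have "lt x y \<longleftrightarrow> (\<forall>i<n. g x i < g y i)" using ltQ gL x y by auto
    also have "\<dots> \<longleftrightarrow> prod_less n (g x) (g y)"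
    proof
      assume "\<forall>i<n. g x i < g y i"
      then show "prod_less n (g x) (g y)" unfolding prod_less_def using n0
        by (metis less_imp_le less_irrefl)
    next
      assume pl: "prod_less n (g x) (g y)"
      have "g x \<in> D" "g y \<in> D" using gD x y by auto
      then have "\<forall>i<n. g x i \<noteq> g y i" using pl assms(4) unfolding no_common_coord_def prod_less_def by auto
      then show "\<forall>i<n. g x i < g y i" using pl unfolding prod_less_def by (auto simp: order_le_less)
    qed
    finally show "lt x y \<longleftrightarrow> prod_less n (g x) (g y)" .
  qed
  have "is_embedding n g Q lt L D (prod_less n) coord_less"
    unfolding is_embedding_def coord_less_def using inj gD lt gL by auto
  then show ?thesis using g(2) by blast
qed

end
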